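(* Let $\kappa$ be a regular infinite cardinal and $\mu$ a singular cardinal with $\mathrm{cf}(\mu)=\kappa$. (1) If $\lambda$ is a cardinal with $\lambda<2^\lambda<\mu$, then $\lambda<\mathrm{non}(\mathcal M_\kappa({}^{\mu}2,\kappa))$. Consequently, if $\mu$ is a strong limit cardinal, then $\mu^+\le\mathrm{non}(\mathcal M_\kappa({}^{\mu}2,\kappa))$. (2) If $\lambda$ is a regular cardinal with $\kappa<\lambda<\mu\le 2^\lambda$ and there exists a ${<}\kappa^+$-independent family $\mathcal X\subseteq[\lambda]^\lambda$ of cardinality $\mu$, then $\mathrm{non}(\mathcal M_\kappa({}^{\mu}2,\kappa))\le\lambda$.
   Context: For ordinals $\delta,\rho$, ${}^{\delta}\rho$ is the set of functions $\delta\to\rho$; for a partial function $s\colon\delta\rightharpoonup\rho$, $[s]=\{f\in{}^{\delta}\rho: s\subseteq f\}$. The ${<}\kappa$-box topology on ${}^{\delta}\rho$ has base $\{[s]: |\mathrm{dom}(s)|<\kappa\}$; $(X,\kappa)$ denotes $X$ with it. A set is $\kappa$-meagre if it is a union of at most $\kappa$ nowhere dense sets; $\mathcal M_\kappa(X,\tau)$ is the ideal of $\kappa$-meagre subsets; $\mathrm{non}(\mathcal I)$ is the least size of a subset of the space not in $\mathcal I$. For a regular cardinal $\lambda$, a family $\mathcal X\subseteq[\lambda]^\lambda$ is ${<}\nu$-independent if for all disjoint $A,B\in[\mathcal X]^{<\nu}$ we have $|\bigcap A\setminus\bigcup B|=\lambda$. *)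

theory Defs
  imports "HOL-Analysis.Analysis"
begin

unbundle cardinal_syntax

definition cyl :: "('m \<rightharpoonup> bool) \<Rightarrow> ('m \<Rightarrow> bool) set" where
  "cyl s = {f. \<forall>x \<in> dom s. s x = Some (f x)}"

text \<open>The <kappa-box topology on the space of all functions 'm \<Rightarrow> bool (i.e. on ^mu 2,
  where mu = |UNIV :: 'm set|), with kappa given as the cardinality of the set K:
  generated by the base of all [s] with |dom s| < kappa.\<close>
definition box_top :: "'k set \<Rightarrow> ('m \<Rightarrow> bool) topology" where
  "box_top K = topology_generated_by {cyl s | s. |dom s| <o |K|}"

definition nowhere_dense_in :: "'a topology \<Rightarrow> 'a set \<Rightarrow> bool" where
  "nowhere_dense_in X A \<longleftrightarrow> A \<subseteq> topspace X \<and> X interior_of (X closure_of A) = {}"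

definition kmeagre :: "'k set \<Rightarrow> 'a topology \<Rightarrow> 'a set \<Rightarrow> bool" where
  "kmeagre K X A \<longleftrightarrow> (\<exists>\<N>. |\<N>| \<le>o |K| \<and> (\<forall>N \<in> \<N>. nowhere_dense_in X N) \<and> A = \<Union>\<N>)"

definition cof_is :: "'a rel \<Rightarrow> 'c set \<Rightarrow> bool" where
  "cof_is r C \<longleftrightarrow> (\<exists>A. A \<subseteq> Field r \<and> cofinal A r \<and> |A| =o |C| ) \<and>
                   (\<forall>A. A \<subseteq> Field r \<and> cofinal A r \<longrightarrow> |C| \<le>o |A| )"

end

theory Submission
  imports Defs
begin


definition cy :: "'m set \<Rightarrow> ('m \<Rightarrow> bool) \<Rightarrow> ('m \<Rightarrow> bool) set" where
  "cy D f = {g. \<forall>x\<in>D. g x = f x}"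

lemma cyl_pm: "cyl (\<lambda>x. if x \<in> D then Some (f x) else None) = cy D f"
  unfolding cyl_def cy_def by (auto simp: dom_def)

lemma dom_pm: "dom (\<lambda>x. if x \<in> D then Some (f x) else None) = D"
  by (auto simp: dom_def)

lemma open_cy:
  assumes "|D| <o |K|"
  shows "openin (box_top K) (cy D f)"
proof -
  have "cy D f \<in> {cyl s | s. |dom s| <o |K|}"
  proof -
    let ?s = "\<lambda>x. if x \<in> D then Some (f x) else None"
    have "cy D f = cyl ?s" by (rule cyl_pm[symmetric])
    moreover have "|dom ?s| <o |K|" unfolding dom_pm by (rule assms)
    ultimately show ?thesis by blast
  qed
  then show ?thesis unfolding box_top_def by (rule topology_generated_by_Basis)
qed

lemma fin_small:
  assumes "finite A" "Cinfinite |K|"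
  shows "|A| <o |K|"
  using finite_ordLess_infinite[OF card_of_Well_order card_of_Well_order, of A K] assms
  unfolding cinfinite_def by (simp add: Field_card_of)

lemma topspace_box:
  assumes "Cinfinite |K|"
  shows "topspace (box_top K) = UNIV"
proof -
  have "|{}::'m set| <o |K|" using fin_small[OF _ assms] by blast
  then have "openin (box_top K) (cy ({}::'m set) f)" for f by (rule open_cy)
  moreover have "cy {} f = UNIV" for f :: "'m \<Rightarrow> bool" by (simp add: cy_def)
  ultimately show ?thesis using openin_subset by fastforce
qed

lemma small_un:
  assumes "Cinfinite |K|" "|A| <o |K|" "|B| <o |K|"
  shows "|A \<union> B| <o |K|"
  using assms card_of_Un_ordLess_infinite unfolding cinfinite_def by (auto simp: Field_card_of)

lemma open_nbhd:
  assumes K: "Cinfinite |K|" and U: "openin (box_top K) U" and g: "g \<in> U"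
  shows "\<exists>D. |D| <o |K| \<and> cy D g \<subseteq> U"
proof -
  have "generate_topology_on {cyl s | s. |dom s| <o |K|} U"
    using U unfolding box_top_def by (rule openin_topology_generated_by)
  then show ?thesis using g
  proof (induction arbitrary: g)
    case Empty then show ?case by simp
  next
    case (Int a b)
    then obtain D1 D2 where "|D1| <o |K|" "cy D1 g \<subseteq> a" "|D2| <o |K|" "cy D2 g \<subseteq> b" by blast
    then show ?case using small_un[OF K] by (intro exI[of _ "D1 \<union> D2"]) (auto simp: cy_def)
  next
    case (UN KK)
    then show ?case by blast
  next
    case (Basis s)
    then obtain t where t: "s = cyl t" "|dom t| <o |K|" by blast
    have "cy (dom t) g \<subseteq> s" using Basis.prems t unfolding cy_def cyl_def by auto
    then show ?case using t by blast
  qed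
qed


lemma ND_intro:
  assumes K: "Cinfinite |K|"
    and H: "\<And>D f. |D| <o |K| \<Longrightarrow> \<exists>D' f'. |D'| <o |K| \<and> cy D' f' \<subseteq> cy D f \<and> cy D' f' \<inter> N = {}"
  shows "nowhere_dense_in (box_top K) N"
  unfolding nowhere_dense_in_def
proof
  show "N \<subseteq> topspace (box_top K)" by (simp add: topspace_box[OF K])
  show "box_top K interior_of (box_top K closure_of N) = {}"
  proof (rule ccontr)
    assume "box_top K interior_of (box_top K closure_of N) \<noteq> {}"
    then obtain g where g: "g \<in> box_top K interior_of (box_top K closure_of N)" by blast
    then obtain D where D: "|D| <o |K|" "cy D g \<subseteq> box_top K interior_of (box_top K closure_of N)"
      using open_nbhd[OF K, of "box_top K interior_of (box_top K closure_of N)" g] by auto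
    obtain D' f' where D': "|D'| <o |K|" "cy D' f' \<subseteq> cy D g" "cy D' f' \<inter> N = {}"
      using H[OF D(1)] by blast
    have f': "f' \<in> cy D' f'" by (simp add: cy_def)
    have io: "box_top K interior_of (box_top K closure_of N) \<subseteq> box_top K closure_of N"
      by (rule interior_of_subset)
    have "f' \<in> box_top K closure_of N"
      using D(2) D'(2) f' io by (meson subsetD)
    moreover have "openin (box_top K) (cy D' f')" using open_cy[OF D'(1)] .
    ultimately have "\<exists>y\<in>N. y \<in> cy D' f'" using f' unfolding in_closure_of by blast
    then show False using D'(3) by blast
  qed
qed

lemma ND_elim:
  assumes K: "Cinfinite |K|" and N: "nowhere_dense_in (box_top K) N" and D: "|D| <o |K|"
  shows "\<exists>D' f'. D \<subseteq> D' \<and> |D'| <o |K| \<and> (\<forall>x\<in>D. f' x = f x) \<and> cy D' f' \<inter> N = {}"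
proof -
  have op: "openin (box_top K) (cy D f)" by (rule open_cy[OF D])
  have "\<not> cy D f \<subseteq> box_top K closure_of N"
  proof
    assume "cy D f \<subseteq> box_top K closure_of N"
    then have "cy D f \<subseteq> box_top K interior_of (box_top K closure_of N)"
      using op by (simp add: interior_of_maximal)
    moreover have "f \<in> cy D f" by (simp add: cy_def)
    ultimately show False using N unfolding nowhere_dense_in_def by blast
  qed
  then obtain g where g: "g \<in> cy D f" "g \<notin> box_top K closure_of N" by blast
  have "openin (box_top K) (topspace (box_top K) - box_top K closure_of N)"
    by (simp add: openin_diff)
  then obtain D0 where D0: "|D0| <o |K|" "cy D0 g \<subseteq> topspace (box_top K) - box_top K closure_of N"
    using open_nbhd[OF K, of _ g] g topspace_box[OF K] by blast
  have NN: "N \<subseteq> box_top K closure_of N"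
    using N closure_of_subset unfolding nowhere_dense_in_def by blast
  show ?thesis
  proof (intro exI conjI)
    show "D \<subseteq> D \<union> D0" by blast
    show "|D \<union> D0| <o |K|" using small_un[OF K D D0(1)] .
    show "\<forall>x\<in>D. g x = f x" using g(1) by (simp add: cy_def)
    show "cy (D \<union> D0) g \<inter> N = {}" using D0(2) NN by (auto simp: cy_def)
  qed
qed

lemma small_ND:
  fixes Y :: "('m \<Rightarrow> bool) set"
  assumes K: "Cinfinite |K|" and KM: "|K| \<le>o |UNIV :: 'm set|"
    and P: "|Pow Y| <o |UNIV :: 'm set|"
  shows "nowhere_dense_in (box_top K) Y"
proof (rule ND_intro[OF K])
  fix D :: "'m set" and f assume D: "|D| <o |K|"
  have infM: "infinite (UNIV :: 'm set)"
    using K KM card_of_ordLeq_finite unfolding cinfinite_def by (auto simp: Field_card_of)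
  have DM: "|D| <o |UNIV :: 'm set|" using D KM ordLess_ordLeq_trans by blast
  have "\<exists>a b. a \<notin> D \<and> b \<notin> D \<and> a \<noteq> b \<and> (\<forall>y\<in>Y. y a = y b)"
  proof (rule ccontr)
    assume nex: "\<not> ?thesis"
    let ?c = "\<lambda>a. {y\<in>Y. y a}"
    have "inj_on ?c (- D)"
    proof (rule inj_onI)
      fix a b assume "a \<in> - D" "b \<in> - D" "?c a = ?c b"
      then show "a = b" using nex by blast
    qed
    then have "|- D| \<le>o |Pow Y|" by (rule card_of_ordLeqI) auto
    then have "|- D| <o |UNIV :: 'm set|" using P ordLeq_ordLess_trans by blast
    then have "|D \<union> - D| <o |UNIV :: 'm set|" using card_of_Un_ordLess_infinite[OF infM DM] by blast
    moreover have "D \<union> - D = UNIV" by simp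
    ultimately show False using ordLess_irreflexive[of "|UNIV :: 'm set|"] by simp
  qed
  then obtain a b where ab: "a \<notin> D" "b \<notin> D" "a \<noteq> b" "\<forall>y\<in>Y. y a = y b" by iprover
  show "\<exists>D' f'. |D'| <o |K| \<and> cy D' f' \<subseteq> cy D f \<and> cy D' f' \<inter> Y = {}"
  proof (intro exI conjI)
    show "|D \<union> {a, b}| <o |K|" by (rule small_un[OF K D fin_small[OF _ K]]) simp
    show "cy (D \<union> {a, b}) (f(a := True, b := False)) \<subseteq> cy D f" using ab by (auto simp: cy_def)
    show "cy (D \<union> {a, b}) (f(a := True, b := False)) \<inter> Y = {}" using ab by (auto simp: cy_def)
  qed
qed


lemma pow_le:
  assumes "|Y| \<le>o |L|"
  shows "|Pow Y| \<le>o |Pow L|"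
proof -
  obtain f where f: "inj_on f Y" "f ` Y \<subseteq> L" using assms[unfolded card_of_ordLeq[symmetric]] by blast
  show ?thesis
    by (rule card_of_ordLeqI[OF inj_on_image_Pow[OF f(1)]]) (use f(2) in auto)
qed

lemma K_le_M:
  assumes "cof_is |UNIV :: 'm set| K"
  shows "|K| \<le>o |UNIV :: 'm set|"
proof -
  obtain A where "A \<subseteq> Field |UNIV :: 'm set|" "|A| =o |K|" using assms unfolding cof_is_def by blast
  then show ?thesis using ordIso_symmetric ordIso_ordLeq_trans card_of_mono1 by (metis subset_UNIV)
qed

lemma part1:
  fixes Y :: "('m \<Rightarrow> bool) set" and L :: "'l set"
  assumes K: "Cinfinite |K|" and KM: "|K| \<le>o |UNIV :: 'm set|"
    and P: "|Pow L| <o |UNIV :: 'm set|" and Y: "|Y| \<le>o |L|"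
  shows "kmeagre K (box_top K) Y"
proof -
  have "|Pow Y| <o |UNIV :: 'm set|" using pow_le[OF Y] P ordLeq_ordLess_trans by blast
  then have "nowhere_dense_in (box_top K) Y" by (rule small_ND[OF K KM])
  moreover have "|{Y}| \<le>o |K|" using fin_small[OF _ K, of "{Y}"] ordLess_imp_ordLeq by blast
  ultimately show ?thesis unfolding kmeagre_def by (intro exI[of _ "{Y}"]) auto
qed

lemma part2:
  fixes Y :: "('m \<Rightarrow> bool) set"
  assumes K: "Cinfinite |K|" and cof: "cof_is |UNIV :: 'm set| K"
    and SL: "\<forall>X :: 'm set. |X| <o |UNIV :: 'm set| \<longrightarrow> |Pow X| <o |UNIV :: 'm set|"
    and Y: "|Y| \<le>o |UNIV :: 'm set|"
  shows "kmeagre K (box_top K) Y"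
proof -
  have KM: "|K| \<le>o |UNIV :: 'm set|" using K_le_M[OF cof] .
  obtain A where A: "cofinal A |UNIV :: 'm set|" "|A| =o |K|" using cof unfolding cof_is_def by iprover
  have "\<exists>h. inj_on h Y \<and> h ` Y \<subseteq> (UNIV :: 'm set)" using Y[unfolded card_of_ordLeq[symmetric]] .
  then obtain h0 where h0: "inj_on h0 Y \<and> h0 ` Y \<subseteq> (UNIV :: 'm set)" ..
  define h where "h = h0"
  have h: "inj_on h Y" using h0 unfolding h_def by (rule conjunct1)
  define Ya where "Ya a = {y\<in>Y. h y \<in> underS |UNIV :: 'm set| a}" for a
  have nd: "nowhere_dense_in (box_top K) (Ya a)" for a
  proof (rule small_ND[OF K KM])
    have "|h ` Ya a| \<le>o |underS |UNIV :: 'm set| a|" by (rule card_of_mono1) (auto simp: Ya_def)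
    moreover have "|underS |UNIV :: 'm set| a| <o |UNIV :: 'm set|"
      using card_of_underS[OF card_of_Card_order, of a "UNIV :: 'm set"] by (simp add: Field_card_of)
    ultimately have "|h ` Ya a| <o |UNIV :: 'm set|" using ordLeq_ordLess_trans by blast
    then have "|Pow (h ` Ya a)| <o |UNIV :: 'm set|" using SL by blast
    moreover have "inj_on h (Ya a)" using h by (rule inj_on_subset) (auto simp: Ya_def)
    then have "|Pow (Ya a)| \<le>o |Pow (h ` Ya a)|"
      by (intro card_of_ordLeqI[OF inj_on_image_Pow]) auto
    ultimately show "|Pow (Ya a)| <o |UNIV :: 'm set|" using ordLeq_ordLess_trans by blast
  qed
  have "|Ya ` A| \<le>o |A|" by (rule card_of_image)
  then have card: "|Ya ` A| \<le>o |K|" using A(2) ordLeq_ordIso_trans by blast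
  have un: "Y = \<Union>(Ya ` A)"
  proof
    show "Y \<subseteq> \<Union>(Ya ` A)"
    proof
      fix y assume y: "y \<in> Y"
      obtain b where "b \<in> A" "h y \<noteq> b" "(h y, b) \<in> |UNIV :: 'm set|"
        using A(1) unfolding cofinal_def by (auto simp: Field_card_of)
      then show "y \<in> \<Union>(Ya ` A)" using y unfolding Ya_def underS_def by blast
    qed
  qed (auto simp: Ya_def)
  show ?thesis unfolding kmeagre_def using card nd un by blast
qed


definition glue :: "('k \<Rightarrow> 'm set \<times> ('m \<Rightarrow> bool)) \<Rightarrow> 'k set \<Rightarrow> 'm set \<times> ('m \<Rightarrow> bool)" where
  "glue t S = ((\<Union>j\<in>S. fst (t j)),
     (\<lambda>x. if x \<in> (\<Union>j\<in>S. fst (t j)) then snd (t (SOME j. j \<in> S \<and> x \<in> fst (t j))) x else False))"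

definition extp :: "'m set \<times> ('m \<Rightarrow> bool) \<Rightarrow> 'm set \<times> ('m \<Rightarrow> bool) \<Rightarrow> bool" where
  "extp p q \<longleftrightarrow> fst p \<subseteq> fst q \<and> (\<forall>x\<in>fst p. snd q x = snd p x)"

definition goodx :: "'k set \<Rightarrow> ('m \<Rightarrow> bool) set \<Rightarrow> 'm set \<times> ('m \<Rightarrow> bool) \<Rightarrow> 'm set \<times> ('m \<Rightarrow> bool) \<Rightarrow> bool" where
  "goodx K N p q \<longleftrightarrow> extp p q \<and> |fst q| <o |K| \<and> cy (fst q) (snd q) \<inter> N = {}"

definition stepx :: "'k set \<Rightarrow> ('m \<Rightarrow> bool) set \<Rightarrow> 'm set \<times> ('m \<Rightarrow> bool) \<Rightarrow> 'm set \<times> ('m \<Rightarrow> bool)" where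
  "stepx K N p = (if \<exists>q. goodx K N p q then SOME q. goodx K N p q else p)"

lemma extp_refl: "extp p p" by (simp add: extp_def)

lemma extp_trans: "extp p q \<Longrightarrow> extp q r \<Longrightarrow> extp p r"
  unfolding extp_def by auto

lemma glue_cong:
  assumes "\<forall>j\<in>S. t j = t' j"
  shows "glue t S = glue t' S"
proof -
  have U: "(\<Union>j\<in>S. fst (t j)) = (\<Union>j\<in>S. fst (t' j))" using assms by auto
  have P: "(\<lambda>j. j \<in> S \<and> x \<in> fst (t j)) = (\<lambda>j. j \<in> S \<and> x \<in> fst (t' j))" for x
    using assms by auto
  have "(if x \<in> (\<Union>j\<in>S. fst (t j)) then snd (t (SOME j. j \<in> S \<and> x \<in> fst (t j))) x else False)
      = (if x \<in> (\<Union>j\<in>S. fst (t' j)) then snd (t' (SOME j. j \<in> S \<and> x \<in> fst (t' j))) x else False)" for x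
  proof (cases "x \<in> (\<Union>j\<in>S. fst (t j))")
    case True
    then have "\<exists>j. j \<in> S \<and> x \<in> fst (t j)" by blast
    then have "(SOME j. j \<in> S \<and> x \<in> fst (t j)) \<in> S" by (rule someI2_ex) blast
    then show ?thesis using True U P[of x] assms by simp
  next
    case False then show ?thesis using U by simp
  qed
  then show ?thesis unfolding glue_def using U by auto
qed

lemma glue_ext:
  assumes ch: "\<forall>i\<in>S. \<forall>j\<in>S. extp (t i) (t j) \<or> extp (t j) (t i)" and j: "j \<in> S"
  shows "extp (t j) (glue t S)"
  unfolding extp_def
proof (intro conjI ballI)
  show "fst (t j) \<subseteq> fst (glue t S)" using j by (auto simp: glue_def)
  fix x assume x: "x \<in> fst (t j)"
  let ?j = "SOME j. j \<in> S \<and> x \<in> fst (t j)"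
  have "\<exists>j. j \<in> S \<and> x \<in> fst (t j)" using x j by blast
  then have j': "?j \<in> S \<and> x \<in> fst (t ?j)" by (rule someI_ex)
  have "extp (t ?j) (t j) \<or> extp (t j) (t ?j)" using ch j j' by blast
  then have "snd (t ?j) x = snd (t j) x"
    using j' x unfolding extp_def by auto
  then show "snd (glue t S) x = snd (t j) x" using x j by (auto simp: glue_def)
qed

lemma fusion:
  fixes F :: "'k \<Rightarrow> ('m \<Rightarrow> bool) set" and K :: "'k set"
  assumes K: "Cinfinite |K|" and reg: "regularCard |K|"
    and nd: "\<forall>k\<in>K. nowhere_dense_in (box_top K) (F k)"
  shows "\<exists>D f. |D| \<le>o |K| \<and> (\<forall>k\<in>K. \<forall>g. (\<forall>x\<in>D. g x = f x) \<longrightarrow> g \<notin> F k)"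
proof -
  let ?r = "|K|"
  have wo: "wo_rel ?r" unfolding wo_rel_def by (rule card_of_Well_order)
  have FK: "Field ?r = K" by (simp add: Field_card_of)
  have infK: "infinite K" using K unfolding cinfinite_def by (simp add: Field_card_of)
  have st: "stable ?r" by (rule regularCard_stable[OF card_of_Card_order _ reg]) (simp add: FK infK)
  define H where "H t k = stepx K (F k) (glue t (underS ?r k))" for t k
  have adm: "wo_rel.adm_wo ?r H"
    unfolding wo_rel.adm_wo_def[OF wo] H_def using glue_cong by metis
  define t where "t = wo_rel.worec ?r H"
  have tfix: "t k = H t k" for k
    unfolding t_def using wo_rel.worec_fixpoint[OF wo adm] by metis
  have inv: "k \<in> K \<longrightarrow> |fst (t k)| <o |K| \<and> cy (fst (t k)) (snd (t k)) \<inter> F k = {}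
      \<and> (\<forall>j\<in>underS ?r k. extp (t j) (t k))" for k
  proof (induct k rule: wo_rel.well_order_induct[OF wo])
    case (1 k)
    show ?case
    proof
      assume kK: "k \<in> K"
      let ?S = "underS ?r k"
      have SK: "?S \<subseteq> K" using Order_Relation.underS_Field[of ?r k] FK by blast
      have IH: "\<forall>j\<in>?S. |fst (t j)| <o |K| \<and> cy (fst (t j)) (snd (t j)) \<inter> F j = {}
          \<and> (\<forall>i\<in>underS ?r j. extp (t i) (t j))"
        using 1 SK unfolding underS_def by blast
      have ch: "\<forall>i\<in>?S. \<forall>j\<in>?S. extp (t i) (t j) \<or> extp (t j) (t i)"
      proof (intro ballI)
        fix i j assume i: "i \<in> ?S" and j: "j \<in> ?S"
        have "i \<in> K" "j \<in> K" using i j SK by auto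
        then have "(i, j) \<in> ?r \<or> (j, i) \<in> ?r" using wo_rel.TOTALS[OF wo] FK by blast
        then show "extp (t i) (t j) \<or> extp (t j) (t i)"
          using IH i j extp_refl unfolding underS_def by blast
      qed
      let ?p = "glue t ?S"
      have pe: "\<forall>j\<in>?S. extp (t j) ?p" using glue_ext[OF ch] by blast
      have "|?S| <o |K|" using card_of_underS[OF card_of_Card_order, of k K] kK FK by simp
      then have "|\<Union>j\<in>?S. fst (t j)| <o |K|"
        by (rule stable_UNION[OF st]) (use IH in blast)
      then have ps: "|fst ?p| <o |K|" unfolding glue_def by simp
      obtain D' f' where D': "fst ?p \<subseteq> D'" "|D'| <o |K|" "\<forall>x\<in>fst ?p. f' x = snd ?p x" "cy D' f' \<inter> F k = {}"
        using ND_elim[OF K _ ps, of "F k" "snd ?p"] nd kK by blast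
      have ex: "\<exists>q. goodx K (F k) ?p q"
        using D' unfolding goodx_def extp_def by (intro exI[of _ "(D', f')"]) auto
      have "t k = stepx K (F k) ?p" using tfix[of k] unfolding H_def .
      then have g: "goodx K (F k) ?p (t k)" using someI_ex[OF ex] unfolding stepx_def using ex by simp
      show "|fst (t k)| <o |K| \<and> cy (fst (t k)) (snd (t k)) \<inter> F k = {} \<and> (\<forall>j\<in>?S. extp (t j) (t k))"
        using g pe extp_trans unfolding goodx_def by blast
    qed
  qed
  have ch: "\<forall>i\<in>K. \<forall>j\<in>K. extp (t i) (t j) \<or> extp (t j) (t i)"
  proof (intro ballI)
    fix i j assume i: "i \<in> K" and j: "j \<in> K"
    then have "(i, j) \<in> ?r \<or> (j, i) \<in> ?r" using wo_rel.TOTALS[OF wo] FK by blast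
    then show "extp (t i) (t j) \<or> extp (t j) (t i)"
      using inv i j extp_refl unfolding underS_def by blast
  qed
  let ?p = "glue t K"
  have pe: "\<forall>j\<in>K. extp (t j) ?p" using glue_ext[OF ch] by blast
  have "\<forall>j\<in>K. |fst (t j)| \<le>o |K|" using inv ordLess_imp_ordLeq by blast
  then have "|\<Union>j\<in>K. fst (t j)| \<le>o |K|"
    by (rule card_of_UNION_ordLeq_infinite[OF infK ordLeq_refl[OF card_of_Card_order]])
  then have "|fst ?p| \<le>o |K|" unfolding glue_def by simp
  moreover have "\<forall>k\<in>K. \<forall>g. (\<forall>x\<in>fst ?p. g x = snd ?p x) \<longrightarrow> g \<notin> F k"
  proof (intro ballI allI impI)
    fix k g assume k: "k \<in> K" and g: "\<forall>x\<in>fst ?p. g x = snd ?p x"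
    have "g \<in> cy (fst (t k)) (snd (t k))" using pe k g unfolding extp_def cy_def by auto
    then show "g \<notin> F k" using inv k by blast
  qed
  ultimately show ?thesis by blast
qed


lemma part3:
  fixes L :: "'l set" and K :: "'k set" and XX :: "'l set set"
  assumes K: "Cinfinite |K|" and reg: "regularCard |K|" and Lne: "L \<noteq> {}"
    and XM: "|XX| =o |UNIV :: 'm set|"
    and ind: "\<forall>AA BB. AA \<subseteq> XX \<and> BB \<subseteq> XX \<and> AA \<inter> BB = {} \<and> |AA| \<le>o |K| \<and> |BB| \<le>o |K| \<longrightarrow>
             |(L \<inter> \<Inter>AA) - \<Union>BB| =o |L|"
  shows "\<exists>Y \<subseteq> topspace (box_top K :: ('m \<Rightarrow> bool) topology). |Y| \<le>o |L| \<and> \<not> kmeagre K (box_top K) Y"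
proof -
  obtain h where h: "bij_betw h (UNIV :: 'm set) XX"
    using XM ordIso_symmetric card_of_ordIso by blast
  define Y where "Y = (\<lambda>\<xi> \<alpha>. \<xi> \<in> h \<alpha>) ` L"
  have Ysz: "|Y| \<le>o |L|" unfolding Y_def by (rule card_of_image)
  have nm: "\<not> kmeagre K (box_top K) Y"
  proof
    assume "kmeagre K (box_top K) Y"
    then obtain NN where NN: "|NN| \<le>o |K|" "\<forall>N\<in>NN. nowhere_dense_in (box_top K) N" "Y = \<Union>NN"
      unfolding kmeagre_def by blast
    have ne: "NN \<noteq> {}" using NN(3) Lne unfolding Y_def by auto
    obtain g where g: "g ` K = NN" using NN(1)[folded card_of_ordLeq2[OF ne]] by iprover
    obtain D f where Df: "|D| \<le>o |K|" "\<forall>k\<in>K. \<forall>y. (\<forall>x\<in>D. y x = f x) \<longrightarrow> y \<notin> g k"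
      using fusion[OF K reg, of g] NN(2) g by blast
    define AA where "AA = h ` {\<alpha>\<in>D. f \<alpha>}"
    define BB where "BB = h ` {\<alpha>\<in>D. \<not> f \<alpha>}"
    have inj: "inj h" using h by (simp add: bij_betw_def)
    have sub: "AA \<subseteq> XX" "BB \<subseteq> XX" using h unfolding AA_def BB_def bij_betw_def by auto
    have disj: "AA \<inter> BB = {}" using inj unfolding AA_def BB_def inj_def by auto
    have "|AA| \<le>o |K|" unfolding AA_def
    proof -
      have "{\<alpha>\<in>D. f \<alpha>} \<subseteq> D" by blast
      then show "|h ` {\<alpha>\<in>D. f \<alpha>}| \<le>o |K|"
        by (rule ordLeq_transitive[OF card_of_image ordLeq_transitive[OF card_of_mono1 Df(1)]])
    qed
    moreover have "|BB| \<le>o |K|" unfolding BB_def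
    proof -
      have "{\<alpha>\<in>D. \<not> f \<alpha>} \<subseteq> D" by blast
      then show "|h ` {\<alpha>\<in>D. \<not> f \<alpha>}| \<le>o |K|"
        by (rule ordLeq_transitive[OF card_of_image ordLeq_transitive[OF card_of_mono1 Df(1)]])
    qed
    ultimately have "|(L \<inter> \<Inter>AA) - \<Union>BB| =o |L|" using ind sub disj by blast
    then obtain b where "bij_betw b ((L \<inter> \<Inter>AA) - \<Union>BB) L" using card_of_ordIso by blast
    then have "(L \<inter> \<Inter>AA) - \<Union>BB \<noteq> {}" using Lne by (auto simp: bij_betw_def)
    then obtain \<xi> where xi: "\<xi> \<in> L" "\<forall>A\<in>AA. \<xi> \<in> A" "\<forall>B\<in>BB. \<xi> \<notin> B" by blast
    let ?y = "\<lambda>\<alpha>. \<xi> \<in> h \<alpha>"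
    have agree: "\<forall>x\<in>D. ?y x = f x"
    proof
      fix x assume x: "x \<in> D"
      show "?y x = f x"
      proof (cases "f x")
        case True then have "h x \<in> AA" using x unfolding AA_def by blast
        then show ?thesis using xi True by blast
      next
        case False then have "h x \<in> BB" using x unfolding BB_def by blast
        then show ?thesis using xi False by blast
      qed
    qed
    have "?y \<in> Y" using xi(1) unfolding Y_def by blast
    then obtain k where k: "k \<in> K" "?y \<in> g k" using NN(3) g by blast
    have d2: "\<forall>y. (\<forall>x\<in>D. y x = f x) \<longrightarrow> y \<notin> g k" using Df(2) k(1) by (rule bspec)
    have "?y \<notin> g k" by (rule mp[OF spec[OF d2, where x="?y"] agree])
    then show False using k(2) by contradiction
  qed
  show ?thesis using Ysz nm by (intro exI[of _ Y]) (simp add: topspace_box[OF K])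
qed

theorem mainTheorem13:
  fixes K :: "'k set" and M :: "'m set" and L :: "'l set"
  assumes M_univ: "M = (UNIV :: 'm set)"
    and kappa_reg: "Cinfinite |K|" "regularCard |K|"
    and mu_sing: "Cinfinite |M|" "\<not> regularCard |M|"
    and cof: "cof_is |M| K"
  shows
   "( |L| <o |Pow L| \<and> |Pow L| <o |M| \<longrightarrow>
        (\<forall>Y \<subseteq> topspace (box_top K :: ('m \<Rightarrow> bool) topology).
            |Y| \<le>o |L| \<longrightarrow> kmeagre K (box_top K) Y))
  \<and> ((\<forall>X :: 'm set. |X| <o |M| \<longrightarrow> |Pow X| <o |M| ) \<longrightarrow>
        (\<forall>Y \<subseteq> topspace (box_top K :: ('m \<Rightarrow> bool) topology).
            |Y| \<le>o |M| \<longrightarrow> kmeagre K (box_top K) Y))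
  \<and> (Cinfinite |L| \<and> regularCard |L| \<and> |K| <o |L| \<and> |L| <o |M| \<and> |M| \<le>o |Pow L| \<and>
     (\<exists>\<X>. \<X> \<subseteq> {A. A \<subseteq> L \<and> |A| =o |L|} \<and> |\<X>| =o |M| \<and>
        (\<forall>\<A> \<B>. \<A> \<subseteq> \<X> \<and> \<B> \<subseteq> \<X> \<and> \<A> \<inter> \<B> = {} \<and> |\<A>| \<le>o |K| \<and> |\<B>| \<le>o |K| \<longrightarrow>
             |(L \<inter> \<Inter>\<A>) - \<Union>\<B>| =o |L| ))
     \<longrightarrow> (\<exists>Y \<subseteq> topspace (box_top K :: ('m \<Rightarrow> bool) topology).
            |Y| \<le>o |L| \<and> \<not> kmeagre K (box_top K) Y))"
  proof -
  have K: "Cinfinite |K|" using kappa_reg(1) .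
  have cof': "cof_is |UNIV :: 'm set| K" using cof M_univ by simp
  have KM: "|K| \<le>o |UNIV :: 'm set|" using K_le_M[OF cof'] .
  have c1: "( |L| <o |Pow L| \<and> |Pow L| <o |M| \<longrightarrow>
        (\<forall>Y \<subseteq> topspace (box_top K :: ('m \<Rightarrow> bool) topology).
            |Y| \<le>o |L| \<longrightarrow> kmeagre K (box_top K) Y))"
  proof (intro impI allI)
    fix Y :: "('m \<Rightarrow> bool) set"
    assume H: "|L| <o |Pow L| \<and> |Pow L| <o |M|" and "Y \<subseteq> topspace (box_top K)" and Y: "|Y| \<le>o |L|"
    from H have P: "|Pow L| <o |UNIV :: 'm set|" unfolding M_univ by (rule conjunct2)
    show "kmeagre K (box_top K) Y" by (rule part1[OF K KM P Y])
  qed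
  have c2: "((\<forall>X :: 'm set. |X| <o |M| \<longrightarrow> |Pow X| <o |M| ) \<longrightarrow>
        (\<forall>Y \<subseteq> topspace (box_top K :: ('m \<Rightarrow> bool) topology).
            |Y| \<le>o |M| \<longrightarrow> kmeagre K (box_top K) Y))"
  proof (intro impI allI)
    fix Y :: "('m \<Rightarrow> bool) set"
    assume H: "\<forall>X :: 'm set. |X| <o |M| \<longrightarrow> |Pow X| <o |M|" and "Y \<subseteq> topspace (box_top K)" and Y: "|Y| \<le>o |M|"
    have H': "\<forall>X :: 'm set. |X| <o |UNIV :: 'm set| \<longrightarrow> |Pow X| <o |UNIV :: 'm set|"
      using H unfolding M_univ .
    have Y': "|Y| \<le>o |UNIV :: 'm set|" using Y unfolding M_univ .
    show "kmeagre K (box_top K) Y" by (rule part2[OF K cof' H' Y'])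
  qed
  have c3: "(Cinfinite |L| \<and> regularCard |L| \<and> |K| <o |L| \<and> |L| <o |M| \<and> |M| \<le>o |Pow L| \<and>
     (\<exists>\<X>. \<X> \<subseteq> {A. A \<subseteq> L \<and> |A| =o |L|} \<and> |\<X>| =o |M| \<and>
        (\<forall>\<A> \<B>. \<A> \<subseteq> \<X> \<and> \<B> \<subseteq> \<X> \<and> \<A> \<inter> \<B> = {} \<and> |\<A>| \<le>o |K| \<and> |\<B>| \<le>o |K| \<longrightarrow>
             |(L \<inter> \<Inter>\<A>) - \<Union>\<B>| =o |L| ))
     \<longrightarrow> (\<exists>Y \<subseteq> topspace (box_top K :: ('m \<Rightarrow> bool) topology).
            |Y| \<le>o |L| \<and> \<not> kmeagre K (box_top K) Y))"
  proof (intro impI)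
    assume H: "Cinfinite |L| \<and> regularCard |L| \<and> |K| <o |L| \<and> |L| <o |M| \<and> |M| \<le>o |Pow L| \<and>
     (\<exists>\<X>. \<X> \<subseteq> {A. A \<subseteq> L \<and> |A| =o |L|} \<and> |\<X>| =o |M| \<and>
        (\<forall>\<A> \<B>. \<A> \<subseteq> \<X> \<and> \<B> \<subseteq> \<X> \<and> \<A> \<inter> \<B> = {} \<and> |\<A>| \<le>o |K| \<and> |\<B>| \<le>o |K| \<longrightarrow>
             |(L \<inter> \<Inter>\<A>) - \<Union>\<B>| =o |L| ))"
    from H have CL: "Cinfinite |L|" by (rule conjunct1)
    then have Lne: "L \<noteq> {}" unfolding cinfinite_def by (auto simp: Field_card_of)
    from H obtain XX where XX: "XX \<subseteq> {A. A \<subseteq> L \<and> |A| =o |L|}" "|XX| =o |M|"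
      "\<forall>\<A> \<B>. \<A> \<subseteq> XX \<and> \<B> \<subseteq> XX \<and> \<A> \<inter> \<B> = {} \<and> |\<A>| \<le>o |K| \<and> |\<B>| \<le>o |K| \<longrightarrow>
             |(L \<inter> \<Inter>\<A>) - \<Union>\<B>| =o |L|"
      by iprover
    have XM: "|XX| =o |UNIV :: 'm set|" using XX(2) unfolding M_univ .
    show "\<exists>Y \<subseteq> topspace (box_top K :: ('m \<Rightarrow> bool) topology).
            |Y| \<le>o |L| \<and> \<not> kmeagre K (box_top K) Y"
      by (rule part3[OF K kappa_reg(2) Lne XM XX(3)])
  qed
  from c1 c2 c3 show ?thesis by (intro conjI)
qed

end
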